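(* Let $M$ be a countably based semigroup in the category $\mathrm{Cu}$ which is an interpolation semigroup, and let $X$ be a finite dimensional compact metric space. Then $\mathrm{Lsc}(X,M)$ is an interpolation semigroup.
   Context: In a partially ordered abelian semigroup $M$, $a\ll b$ (compact containment) means: for every increasing sequence $(b_n)$ whose supremum exists and satisfies $b\le\sup b_n$, there is $n$ with $a\le b_n$. The category $\mathrm{Cu}$ consists of partially ordered abelian semigroups $M$ in which every increasing sequence has a supremum, every element is the supremum of a sequence $(a_n)$ with $a_n\ll a_{n+1}$, and $\ll$ and suprema of increasing sequences are compatible with addition. $M$ is countably based if there is a countable subset $B\subseteq M$ such that whenever $a'\ll a$ in $M$ there is $b\in B$ with $a'\le b\ll a$. $M$ is an interpolation semigroup if whenever $a_i\le b_j$ ($i,j=1,2$) there is $c\in M$ with $a_i\le c\le b_j$ for all $i,j$. $\mathrm{Lsc}(X,M)$ is the set of maps $f\colon X\to M$ such that $\{t\in X: a\ll f(t)\}$ is open for every $a\in M$, with pointwise addition and order. Dimension is covering dimension. *)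

theory Defs
  imports "HOL-Analysis.Analysis"
begin

definition is_sup_seq :: "(nat \<Rightarrow> 'a::order) \<Rightarrow> 'a \<Rightarrow> bool" where
  "is_sup_seq s x \<longleftrightarrow> (\<forall>n. s n \<le> x) \<and> (\<forall>y. (\<forall>n. s n \<le> y) \<longrightarrow> x \<le> y)"

text \<open>Compact containment a << b.\<close>
definition cc :: "'a::order \<Rightarrow> 'a \<Rightarrow> bool" where
  "cc a b \<longleftrightarrow> (\<forall>s x. incseq s \<and> is_sup_seq s x \<and> b \<le> x \<longrightarrow> (\<exists>n. a \<le> s n))"

definition Cu_semigroup :: "'a::{ab_semigroup_add, order} itself \<Rightarrow> bool" where
  "Cu_semigroup _ \<longleftrightarrow>
     (\<forall>a b c::'a. a \<le> b \<longrightarrow> a + c \<le> b + c) \<and>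
     (\<forall>s::nat \<Rightarrow> 'a. incseq s \<longrightarrow> (\<exists>x. is_sup_seq s x)) \<and>
     (\<forall>a::'a. \<exists>s. (\<forall>n. cc (s n) (s (Suc n))) \<and> is_sup_seq s a) \<and>
     (\<forall>a b c d::'a. cc a b \<and> cc c d \<longrightarrow> cc (a + c) (b + d)) \<and>
     (\<forall>s t::nat \<Rightarrow> 'a. \<forall>x y. incseq s \<and> incseq t \<and> is_sup_seq s x \<and> is_sup_seq t y
        \<longrightarrow> is_sup_seq (\<lambda>n. s n + t n) (x + y))"

definition countably_based :: "'a::order itself \<Rightarrow> bool" where
  "countably_based _ \<longleftrightarrow> (\<exists>B::'a set. countable B \<and>
     (\<forall>a' a. cc a' a \<longrightarrow> (\<exists>b\<in>B. a' \<le> b \<and> cc b a)))"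

definition interpolation_semigroup :: "'a::order itself \<Rightarrow> bool" where
  "interpolation_semigroup _ \<longleftrightarrow> (\<forall>a1 a2 b1 b2::'a.
     a1 \<le> b1 \<and> a1 \<le> b2 \<and> a2 \<le> b1 \<and> a2 \<le> b2 \<longrightarrow>
     (\<exists>c. a1 \<le> c \<and> a2 \<le> c \<and> c \<le> b1 \<and> c \<le> b2))"

text \<open>Lsc(X,M): maps X -> M (values outside X irrelevant) such that
  {t \<in> X. a << f t} is open in X for every a.\<close>
definition Lsc :: "'b::metric_space set \<Rightarrow> ('b \<Rightarrow> 'a::order) set" where
  "Lsc X = {f. \<forall>a. openin (top_of_set X) {t\<in>X. cc a (f t)}}"

definition Lsc_interpolation :: "'b::metric_space set \<Rightarrow> 'a::order itself \<Rightarrow> bool" where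
  "Lsc_interpolation X _ \<longleftrightarrow> (\<forall>f1 f2 g1 g2 :: 'b \<Rightarrow> 'a.
     f1 \<in> Lsc X \<and> f2 \<in> Lsc X \<and> g1 \<in> Lsc X \<and> g2 \<in> Lsc X \<and>
     (\<forall>t\<in>X. f1 t \<le> g1 t \<and> f1 t \<le> g2 t \<and> f2 t \<le> g1 t \<and> f2 t \<le> g2 t) \<longrightarrow>
     (\<exists>h\<in>Lsc X. \<forall>t\<in>X. f1 t \<le> h t \<and> f2 t \<le> h t \<and> h t \<le> g1 t \<and> h t \<le> g2 t))"

definition covering_dim_le :: "'b::topological_space set \<Rightarrow> nat \<Rightarrow> bool" where
  "covering_dim_le X n \<longleftrightarrow> (\<forall>\<U>. finite \<U> \<and> (\<forall>U\<in>\<U>. openin (top_of_set X) U) \<and> X \<subseteq> \<Union>\<U> \<longrightarrow>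
     (\<exists>\<V>. finite \<V> \<and> (\<forall>V\<in>\<V>. openin (top_of_set X) V) \<and> X \<subseteq> \<Union>\<V> \<and>
        (\<forall>V\<in>\<V>. \<exists>U\<in>\<U>. V \<subseteq> U) \<and> (\<forall>x\<in>X. card {V\<in>\<V>. x \<in> V} \<le> n + 1)))"

definition finite_dimensional :: "'b::topological_space set \<Rightarrow> bool" where
  "finite_dimensional X \<longleftrightarrow> (\<exists>n. covering_dim_le X n)"

end

theory Submission
  imports Defs
begin

lemma cc_le: "cc a b \<Longrightarrow> a \<le> (b::'a::order)"
  unfolding cc_def
  apply (erule allE[of _ "\<lambda>_. b"], erule allE[of _ b])
  by (auto simp: is_sup_seq_def incseq_def)

lemma cc_mono_right: "cc a b \<Longrightarrow> b \<le> c \<Longrightarrow> cc a (c::'a::order)"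
  unfolding cc_def by (meson order_trans)

lemma cc_mono_left: "a \<le> a' \<Longrightarrow> cc a' b \<Longrightarrow> cc a (b::'a::order)"
  unfolding cc_def by (meson order_trans)

lemma rapid_incseq: "(\<forall>n. cc (s n) (s (Suc n))) \<Longrightarrow> incseq (s::nat\<Rightarrow>'a::order)"
  by (simp add: incseq_SucI cc_le)

lemma cc_sup: "incseq s \<Longrightarrow> is_sup_seq s x \<Longrightarrow> cc a x \<Longrightarrow> \<exists>n. a \<le> (s::nat\<Rightarrow>'a::order) n"
  unfolding cc_def by blast

lemma sup_upper: "is_sup_seq s x \<Longrightarrow> s n \<le> x"
  unfolding is_sup_seq_def by blast

lemma sup_least: "is_sup_seq s x \<Longrightarrow> (\<forall>n. s n \<le> y) \<Longrightarrow> x \<le> y"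
  unfolding is_sup_seq_def by blast

lemma cc_interp:
  fixes a x :: "'a::order"
  assumes R: "\<forall>a::'a::order. \<exists>s. (\<forall>n. cc (s n) (s (Suc n))) \<and> is_sup_seq s a"
    and ax: "cc a x"
  shows "\<exists>y. cc a y \<and> cc y x"
proof -
  obtain s where s: "\<forall>n. cc (s n) (s (Suc n))" "is_sup_seq s x" using R by blast
  have inc: "incseq s" using rapid_incseq s(1) .
  obtain k where k: "a \<le> s k" using cc_sup[OF inc s(2) ax] by blast
  have "cc a (s (Suc k))" using cc_mono_left[OF k] s(1) by blast
  moreover have "cc (s (Suc k)) x"
    using cc_mono_right[OF _ sup_upper[OF s(2)]] s(1) by blast
  ultimately show ?thesis by blast
qed

lemma cc_directed:
  fixes u v g1 g2 :: "'a::order"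
  assumes R: "\<forall>a::'a::order. \<exists>s. (\<forall>n. cc (s n) (s (Suc n))) \<and> is_sup_seq s a"
    and I: "interpolation_semigroup TYPE('a)"
    and u1: "cc u g1" and u2: "cc u g2" and v1: "cc v g1" and v2: "cc v g2"
  shows "\<exists>c. u \<le> c \<and> v \<le> c \<and> cc c g1 \<and> cc c g2"
proof -
  obtain s where s: "\<forall>n. cc (s n) (s (Suc n))" "is_sup_seq s g1" using R by blast
  obtain p where p: "\<forall>n. cc (p n) (p (Suc n))" "is_sup_seq p g2" using R by blast
  have iS: "incseq s" using rapid_incseq s(1) .
  have ip: "incseq p" using rapid_incseq p(1) .
  obtain m1 where m1: "u \<le> s m1" using cc_sup[OF iS s(2) u1] by blast
  obtain m2 where m2: "v \<le> s m2" using cc_sup[OF iS s(2) v1] by blast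
  obtain m3 where m3: "u \<le> p m3" using cc_sup[OF ip p(2) u2] by blast
  obtain m4 where m4: "v \<le> p m4" using cc_sup[OF ip p(2) v2] by blast
  define N where "N = m1 + m2 + m3 + m4"
  have a1: "u \<le> s N" using m1 iS unfolding N_def incseq_def
    by (meson le_add1 le_add2 order_trans add_leE)
  have a2: "v \<le> s N" using m2 iS unfolding N_def incseq_def
    by (meson le_add1 le_add2 order_trans add_leE)
  have a3: "u \<le> p N" using m3 ip unfolding N_def incseq_def
    by (meson le_add1 le_add2 order_trans add_leE)
  have a4: "v \<le> p N" using m4 ip unfolding N_def incseq_def
    by (meson le_add1 le_add2 order_trans add_leE)
  obtain c where c: "u \<le> c" "v \<le> c" "c \<le> s N" "c \<le> p N"
    using I a1 a2 a3 a4 unfolding interpolation_semigroup_def by blast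
  have "cc (s N) g1" using cc_mono_right[OF _ sup_upper[OF s(2)]] s(1) by blast
  moreover have "cc (p N) g2" using cc_mono_right[OF _ sup_upper[OF p(2)]] p(1) by blast
  ultimately show ?thesis using c cc_mono_left by blast
qed

lemma exQ:
  fixes F G1 G2 :: "'a::order"
  assumes R: "\<forall>a::'a::order. \<exists>s. (\<forall>n. cc (s n) (s (Suc n))) \<and> is_sup_seq s a"
    and I: "interpolation_semigroup TYPE('a)"
    and SE: "\<forall>s::nat\<Rightarrow>'a. incseq s \<longrightarrow> (\<exists>x. is_sup_seq s x)"
    and cB: "countable B"
    and B: "\<forall>a' a::'a. cc a' a \<longrightarrow> (\<exists>b\<in>B. a' \<le> b \<and> cc b a)"
    and F1: "F \<le> G1" and F2: "F \<le> G2"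
  shows "\<exists>x. x \<le> G1 \<and> x \<le> G2 \<and> (\<forall>b\<in>B. cc b G1 \<and> cc b G2 \<longrightarrow> b \<le> x)
           \<and> (\<forall>a. cc a x \<longrightarrow> (\<exists>e. cc a e \<and> cc e G1 \<and> cc e G2))"
proof -
  define S where "S = {b\<in>B. cc b G1 \<and> cc b G2}"
  have cS: "countable S" using cB unfolding S_def by simp
  obtain r where r: "\<forall>n. cc (r n) (r (Suc n))" "is_sup_seq r F" using R by blast
  obtain b0 where b0: "b0\<in>B" "r 0 \<le> b0" "cc b0 (r 1)" using B r(1) by fastforce
  have "r 1 \<le> F" using sup_upper[OF r(2)] .
  hence "cc b0 G1" "cc b0 G2" using b0(3) F1 F2 cc_mono_right order_trans by metis+
  hence neS: "S \<noteq> {}" using b0 unfolding S_def by blast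
  define \<beta> where "\<beta> = from_nat_into S"
  have \<beta>S: "\<And>n. \<beta> n \<in> S" unfolding \<beta>_def using from_nat_into[OF neS] by blast
  have Sran: "\<And>b. b \<in> S \<Longrightarrow> \<exists>n. \<beta> n = b" unfolding \<beta>_def
    using from_nat_into_surj[OF cS] by blast
  define P where "P = (\<lambda>n en c. cc c G1 \<and> cc c G2 \<and> en \<le> c \<and> \<beta> (Suc n) \<le> c)"
  define e where "e = rec_nat (\<beta> 0) (\<lambda>n en. SOME c. P n en c)"
  have e0: "e 0 = \<beta> 0" unfolding e_def by simp
  have eS: "\<And>n. e (Suc n) = (SOME c. P n (e n) c)" unfolding e_def by simp
  have Dn: "cc (e n) G1 \<and> cc (e n) G2" for n
  proof (induction n)
    case 0 then show ?case using e0 \<beta>S unfolding S_def by auto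
  next
    case (Suc n)
    have "\<exists>c. P n (e n) c" unfolding P_def
      using cc_directed[OF R I] Suc \<beta>S[of "Suc n"] unfolding S_def by blast
    then have "P n (e n) (e (Suc n))" unfolding eS by (rule someI_ex)
    then show ?case unfolding P_def by blast
  qed
  have Pn: "P n (e n) (e (Suc n))" for n
  proof -
    have "\<exists>c. P n (e n) c" unfolding P_def
      using cc_directed[OF R I] Dn[of n] \<beta>S[of "Suc n"] unfolding S_def by blast
    then show ?thesis unfolding eS by (rule someI_ex)
  qed
  have \<beta>e: "\<beta> n \<le> e n" for n
  proof (cases n)
    case 0 then show ?thesis using e0 by simp
  next
    case (Suc m)
    then show ?thesis using Pn[of m] unfolding P_def by blast
  qed
  have inc: "incseq e" using Pn unfolding P_def by (simp add: incseq_SucI)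
  obtain x where x: "is_sup_seq e x" using SE inc by blast
  have "x \<le> G1" using sup_least[OF x] Dn cc_le by blast
  moreover have "x \<le> G2" using sup_least[OF x] Dn cc_le by blast
  moreover have "\<forall>b\<in>B. cc b G1 \<and> cc b G2 \<longrightarrow> b \<le> x"
  proof (intro ballI impI)
    fix b assume "b \<in> B" "cc b G1 \<and> cc b G2"
    then have "b \<in> S" unfolding S_def by blast
    then obtain n where "\<beta> n = b" using Sran by blast
    then show "b \<le> x" using \<beta>e[of n] sup_upper[OF x, of n] by auto
  qed
  moreover have "\<forall>a. cc a x \<longrightarrow> (\<exists>e. cc a e \<and> cc e G1 \<and> cc e G2)"
  proof (intro allI impI)
    fix a assume "cc a x"
    then obtain y where y: "cc a y" "cc y x" using cc_interp[OF R] by blast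
    obtain n where "y \<le> e n" using cc_sup[OF inc x y(2)] by blast
    then have "cc a (e n)" using y(1) cc_mono_right by blast
    then show "\<exists>e'. cc a e' \<and> cc e' G1 \<and> cc e' G2" using Dn by blast
  qed
  ultimately show ?thesis by blast
qed

lemma fi_le_h:
  fixes F G1 G2 H :: "'a::order"
  assumes R: "\<forall>a::'a. \<exists>s. (\<forall>n. cc (s n) (s (Suc n))) \<and> is_sup_seq s a"
    and B: "\<forall>a' a::'a. cc a' a \<longrightarrow> (\<exists>b\<in>B. a' \<le> b \<and> cc b a)"
    and F1: "F \<le> G1" and F2: "F \<le> G2"
    and Hb: "\<forall>b\<in>B. cc b G1 \<and> cc b G2 \<longrightarrow> b \<le> H"
  shows "F \<le> H"
proof -
  obtain r where r: "\<forall>n. cc (r n) (r (Suc n))" "is_sup_seq r F" using R by blast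
  have "r n \<le> H" for n
  proof -
    obtain b where b: "b\<in>B" "r n \<le> b" "cc b (r (Suc n))" using B r(1) by blast
    have "r (Suc n) \<le> F" using sup_upper[OF r(2)] .
    hence "cc b G1" "cc b G2" using b(3) F1 F2 cc_mono_right order_trans by metis+
    then show ?thesis using Hb b by (meson order_trans)
  qed
  then show ?thesis using sup_least[OF r(2)] by blast
qed

theorem proposition3p5:
  fixes X :: "'b::metric_space set"
  assumes "Cu_semigroup TYPE('a::{ab_semigroup_add, order})"
    and "countably_based TYPE('a)"
    and "interpolation_semigroup TYPE('a)"
    and "compact X"
    and "finite_dimensional X"
  shows "Lsc_interpolation X TYPE('a)"
proof -
  have SE: "\<forall>s::nat\<Rightarrow>'a. incseq s \<longrightarrow> (\<exists>x. is_sup_seq s x)"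
    and R: "\<forall>a::'a. \<exists>s. (\<forall>n. cc (s n) (s (Suc n))) \<and> is_sup_seq s a"
    using assms(1) unfolding Cu_semigroup_def by blast+
  obtain B :: "'a set" where cB: "countable B"
    and B: "\<forall>a' a::'a. cc a' a \<longrightarrow> (\<exists>b\<in>B. a' \<le> b \<and> cc b a)"
    using assms(2) unfolding countably_based_def by blast
  note I = assms(3)
  show ?thesis unfolding Lsc_interpolation_def
  proof (intro allI impI)
    fix f1 f2 g1 g2 :: "'b \<Rightarrow> 'a"
    assume H: "f1 \<in> Lsc X \<and> f2 \<in> Lsc X \<and> g1 \<in> Lsc X \<and> g2 \<in> Lsc X \<and>
     (\<forall>t\<in>X. f1 t \<le> g1 t \<and> f1 t \<le> g2 t \<and> f2 t \<le> g1 t \<and> f2 t \<le> g2 t)"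
    define Q where "Q = (\<lambda>t x. x \<le> g1 t \<and> x \<le> g2 t
           \<and> (\<forall>b\<in>B. cc b (g1 t) \<and> cc b (g2 t) \<longrightarrow> b \<le> x)
           \<and> (\<forall>a. cc a x \<longrightarrow> (\<exists>e. cc a e \<and> cc e (g1 t) \<and> cc e (g2 t))))"
    define h where "h = (\<lambda>t. SOME x. Q t x)"
    have hQ: "Q t (h t)" if "t \<in> X" for t
    proof -
      have "\<exists>x. Q t x" unfolding Q_def
        using exQ[OF R I SE cB B, of "f1 t" "g1 t" "g2 t"] H that by blast
      then show ?thesis unfolding h_def by (rule someI_ex)
    qed
    have lo: "f1 t \<le> h t \<and> f2 t \<le> h t" if "t \<in> X" for t
      using fi_le_h[OF R B, of "f1 t" "g1 t" "g2 t" "h t"]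
        fi_le_h[OF R B, of "f2 t" "g1 t" "g2 t" "h t"] H hQ[OF that] that
      unfolding Q_def by blast
    have g1L: "openin (top_of_set X) {t\<in>X. cc a (g1 t)}" for a
      using H unfolding Lsc_def by blast
    have g2L: "openin (top_of_set X) {t\<in>X. cc a (g2 t)}" for a
      using H unfolding Lsc_def by blast
    have "h \<in> Lsc X" unfolding Lsc_def
    proof (safe)
      fix a
      show "openin (top_of_set X) {t \<in> X. cc a (h t)}"
      proof (subst openin_subopen, intro ballI)
        fix t0 assume t0: "t0 \<in> {t \<in> X. cc a (h t)}"
        then have t0X: "t0 \<in> X" and ah: "cc a (h t0)" by auto
        obtain e where e: "cc a e" "cc e (g1 t0)" "cc e (g2 t0)"
          using hQ[OF t0X] ah unfolding Q_def by blast
        obtain y1 where y1: "cc e y1" "cc y1 (g1 t0)" using cc_interp[OF R e(2)] by blast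
        obtain y2 where y2: "cc e y2" "cc y2 (g2 t0)" using cc_interp[OF R e(3)] by blast
        obtain z1 where z1: "cc a z1" "cc z1 e" using cc_interp[OF R e(1)] by blast
        obtain z2 where z2: "cc z1 z2" "cc z2 e" using cc_interp[OF R z1(2)] by blast
        obtain b where b: "b \<in> B" "z1 \<le> b" "cc b z2" using B z2(1) by blast
        define Wn where "Wn = {t\<in>X. cc y1 (g1 t)} \<inter> {t\<in>X. cc y2 (g2 t)}"
        have "openin (top_of_set X) Wn" unfolding Wn_def using g1L g2L by blast
        moreover have "t0 \<in> Wn" unfolding Wn_def using t0X y1 y2 by blast
        moreover have "Wn \<subseteq> {t \<in> X. cc a (h t)}"
        proof
          fix t assume tO: "t \<in> Wn"
          then have tX: "t \<in> X" unfolding Wn_def by blast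
          have "cc e (g1 t)" using tO y1(1) cc_mono_right cc_le unfolding Wn_def by blast
          moreover have "cc e (g2 t)" using tO y2(1) cc_mono_right cc_le unfolding Wn_def by blast
          moreover have "b \<le> e" using b(3) z2(2) cc_le order_trans by blast
          ultimately have "cc b (g1 t)" "cc b (g2 t)" using cc_mono_left by blast+
          then have "b \<le> h t" using hQ[OF tX] b(1) unfolding Q_def by blast
          then have "cc a (h t)" using z1(1) b(2) cc_mono_right order_trans by blast
          then show "t \<in> {t \<in> X. cc a (h t)}" using tX by blast
        qed
        ultimately show "\<exists>T. openin (top_of_set X) T \<and> t0 \<in> T \<and> T \<subseteq> {t \<in> X. cc a (h t)}"
          by blast
      qed
    qed
    moreover have "\<forall>t\<in>X. f1 t \<le> h t \<and> f2 t \<le> h t \<and> h t \<le> g1 t \<and> h t \<le> g2 t"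
      using lo hQ unfolding Q_def by blast
    ultimately show "\<exists>h\<in>Lsc X. \<forall>t\<in>X. f1 t \<le> h t \<and> f2 t \<le> h t \<and> h t \<le> g1 t \<and> h t \<le> g2 t"
      by blast
  qed
qed

end
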